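(* Let $H$ be a finitely generated group on which simple random walk is transient. Then the wreath product $(\mathbb{Z}/2\mathbb{Z})\wr H$ does not have property $H_{\mathrm{FD}}$.
   Context: $(\mathbb{Z}/2\mathbb{Z})\wr H=(\oplus_H\mathbb{Z}/2\mathbb{Z})\rtimes H$ is the restricted wreath product. A finitely generated group $G$ has property $H_{\mathrm{FD}}$ if every unitary representation $\pi$ of $G$ with nonzero first reduced cohomology $\overline{H}^1(G,\pi)$ (1-cocycles modulo the closure, for pointwise convergence, of 1-coboundaries) admits a nonzero finite-dimensional subrepresentation. *)

theory Defs
  imports "HOL-Analysis.Analysis" "HOL-Algebra.Generated_Groups"
begin

definition finitely_generated :: "('a, 'b) monoid_scheme \<Rightarrow> bool" where
  "finitely_generated G \<longleftrightarrow>
     (\<exists>S. finite S \<and> S \<subseteq> carrier G \<and> generate G S = carrier G)"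

definition return_words :: "('a, 'b) monoid_scheme \<Rightarrow> 'a set \<Rightarrow> nat \<Rightarrow> nat" where
  "return_words G S n =
     card {w. length w = n \<and> set w \<subseteq> S \<and> foldr (\<otimes>\<^bsub>G\<^esub>) w \<one>\<^bsub>G\<^esub> = \<one>\<^bsub>G\<^esub>}"

definition return_prob :: "('a, 'b) monoid_scheme \<Rightarrow> 'a set \<Rightarrow> nat \<Rightarrow> real" where
  "return_prob G S n = real (return_words G S n) / real (card S) ^ n"

text \<open>Transience does not
  depend on the choice of finite symmetric generating set.\<close>
definition srw_transient :: "('a, 'b) monoid_scheme \<Rightarrow> bool" where
  "srw_transient G \<longleftrightarrow>
     (\<exists>S. finite S \<and> S \<noteq> {} \<and> S \<subseteq> carrier G \<and> (\<forall>s\<in>S. inv\<^bsub>G\<^esub> s \<in> S) \<and>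
          generate G S = carrier G \<and> summable (return_prob G S))"

text \<open>Elements: pairs (f, h) with f : carrier H \<rightarrow> Z/2Z (as bool, xor as addition)
  finitely supported, and h \<in> carrier H.  Multiplication:
  (f,h)(f',h') = (f + h.f', h h') where (h.f')(x) = f'(h^{-1} x).\<close>
definition lamplighter :: "('a, 'b) monoid_scheme \<Rightarrow> (('a \<Rightarrow> bool) \<times> 'a) monoid" where
  "lamplighter H =
    \<lparr> carrier = {(f, h). finite {x. f x} \<and> {x. f x} \<subseteq> carrier H \<and> h \<in> carrier H},
      mult = (\<lambda>(f, h) (f', h').
                 ((\<lambda>x. if x \<in> carrier H then f x \<noteq> f' (inv\<^bsub>H\<^esub> h \<otimes>\<^bsub>H\<^esub> x) else False),
                  h \<otimes>\<^bsub>H\<^esub> h')),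
      one = ((\<lambda>_. False), \<one>\<^bsub>H\<^esub>) \<rparr>"

definition l2 :: "nat set \<Rightarrow> (nat \<Rightarrow> complex) set" where
  "l2 I = {f. (\<forall>i. i \<notin> I \<longrightarrow> f i = 0) \<and> (\<lambda>i. (cmod (f i))\<^sup>2) summable_on I}"

definition l2norm :: "nat set \<Rightarrow> (nat \<Rightarrow> complex) \<Rightarrow> real" where
  "l2norm I f = sqrt (infsum (\<lambda>i. (cmod (f i))\<^sup>2) I)"

definition unitary_rep ::
  "('g, 'b) monoid_scheme \<Rightarrow> nat set \<Rightarrow> ('g \<Rightarrow> (nat \<Rightarrow> complex) \<Rightarrow> (nat \<Rightarrow> complex)) \<Rightarrow> bool" where
  "unitary_rep G I \<pi> \<longleftrightarrow>
     (\<forall>g\<in>carrier G.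
        \<pi> g ` l2 I = l2 I \<and>
        (\<forall>u\<in>l2 I. \<forall>v\<in>l2 I. \<forall>a b::complex.
            \<pi> g (\<lambda>i. a * u i + b * v i) = (\<lambda>i. a * \<pi> g u i + b * \<pi> g v i)) \<and>
        (\<forall>u\<in>l2 I. l2norm I (\<pi> g u) = l2norm I u)) \<and>
     (\<forall>u\<in>l2 I. \<pi> \<one>\<^bsub>G\<^esub> u = u) \<and>
     (\<forall>g\<in>carrier G. \<forall>h\<in>carrier G. \<forall>u\<in>l2 I. \<pi> (g \<otimes>\<^bsub>G\<^esub> h) u = \<pi> g (\<pi> h u))"

definition cocycle ::
  "('g, 'b) monoid_scheme \<Rightarrow> nat set \<Rightarrow> ('g \<Rightarrow> (nat \<Rightarrow> complex) \<Rightarrow> (nat \<Rightarrow> complex))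
     \<Rightarrow> ('g \<Rightarrow> nat \<Rightarrow> complex) \<Rightarrow> bool" where
  "cocycle G I \<pi> b \<longleftrightarrow>
     (\<forall>g\<in>carrier G. b g \<in> l2 I) \<and>
     (\<forall>g\<in>carrier G. \<forall>h\<in>carrier G. b (g \<otimes>\<^bsub>G\<^esub> h) = (\<lambda>i. b g i + \<pi> g (b h) i))"

text \<open>b lies in the closure of the coboundaries g \<mapsto> \<pi>(g)v - v for the topology of
  pointwise convergence on G (basic neighbourhoods: finitely many g, radius \<epsilon>).\<close>
definition in_closure_coboundaries ::
  "('g, 'b) monoid_scheme \<Rightarrow> nat set \<Rightarrow> ('g \<Rightarrow> (nat \<Rightarrow> complex) \<Rightarrow> (nat \<Rightarrow> complex))
     \<Rightarrow> ('g \<Rightarrow> nat \<Rightarrow> complex) \<Rightarrow> bool" where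
  "in_closure_coboundaries G I \<pi> b \<longleftrightarrow>
     (\<forall>F. finite F \<and> F \<subseteq> carrier G \<longrightarrow> (\<forall>\<epsilon>>0. \<exists>v\<in>l2 I. \<forall>g\<in>F.
        l2norm I (\<lambda>i. b g i - (\<pi> g v i - v i)) < \<epsilon>))"

definition nonzero_reduced_H1 ::
  "('g, 'b) monoid_scheme \<Rightarrow> nat set \<Rightarrow> ('g \<Rightarrow> (nat \<Rightarrow> complex) \<Rightarrow> (nat \<Rightarrow> complex)) \<Rightarrow> bool" where
  "nonzero_reduced_H1 G I \<pi> \<longleftrightarrow> (\<exists>b. cocycle G I \<pi> b \<and> \<not> in_closure_coboundaries G I \<pi> b)"

text \<open>A nonzero finite-dimensional subrepresentation: a nonzero finite-dimensional
  complex linear subspace of l2 I invariant under all \<pi>(g) (finite-dimensional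
  subspaces are automatically closed).\<close>
definition has_nonzero_fd_subrep ::
  "('g, 'b) monoid_scheme \<Rightarrow> nat set \<Rightarrow> ('g \<Rightarrow> (nat \<Rightarrow> complex) \<Rightarrow> (nat \<Rightarrow> complex)) \<Rightarrow> bool" where
  "has_nonzero_fd_subrep G I \<pi> \<longleftrightarrow>
     (\<exists>V. V \<subseteq> l2 I \<and> (\<lambda>_. 0) \<in> V \<and>
          (\<forall>u\<in>V. \<forall>v\<in>V. \<forall>a b::complex. (\<lambda>i. a * u i + b * v i) \<in> V) \<and>
          (\<exists>B. finite B \<and> B \<subseteq> V \<and>
               (\<forall>u\<in>V. \<exists>c. u = (\<lambda>i. \<Sum>w\<in>B. c w * w i))) \<and>
          (\<exists>u\<in>V. u \<noteq> (\<lambda>_. 0)) \<and>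
          (\<forall>g\<in>carrier G. \<forall>u\<in>V. \<pi> g u \<in> V))"

text \<open>Property H_FD (tested on separable Hilbert spaces l2 I, I \<subseteq> nat; for countable
  groups this is equivalent to testing all unitary representations).\<close>
definition has_HFD :: "('g, 'b) monoid_scheme \<Rightarrow> bool" where
  "has_HFD G \<longleftrightarrow>
     (\<forall>I \<pi>. unitary_rep G I \<pi> \<and> nonzero_reduced_H1 G I \<pi> \<longrightarrow> has_nonzero_fd_subrep G I \<pi>)"

end

theory Submission
  imports Defs "HOL-Library.Function_Algebras"
begin

locale rwalk = group H for H :: "('a, 'b) monoid_scheme" (structure) +
  fixes S :: "'a set"
  assumes S_fin: "finite S" and S_ne: "S \<noteq> {}" and S_sub: "S \<subseteq> carrier H"
    and S_sym: "\<forall>s\<in>S. inv s \<in> S"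
begin

definition cw :: "nat \<Rightarrow> 'a \<Rightarrow> nat" where
  "cw n x = card {w. length w = n \<and> set w \<subseteq> S \<and> foldr (\<otimes>) w \<one> = x}"

definition k :: real where "k = real (card S)"

definition p :: "nat \<Rightarrow> 'a \<Rightarrow> real" where
  "p n x = real (cw n x) / k ^ n"

definition P :: "('a \<Rightarrow> real) \<Rightarrow> 'a \<Rightarrow> real" where
  "P f x = (\<Sum>s\<in>S. f (inv s \<otimes> x)) / k"

lemma k_pos: "k > 0"
  using S_fin S_ne by (simp add: k_def card_gt_0_iff)

lemma foldr_carrier: "set w \<subseteq> S \<Longrightarrow> foldr (\<otimes>) w \<one> \<in> carrier H"
  by (induction w) (use S_sub in auto)

lemma words_fin: "finite {w. length w = n \<and> set w \<subseteq> S}"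
  using finite_lists_length_eq[OF S_fin, of n] by (simp add: conj_commute)

lemma cw_fin: "finite {w. length w = n \<and> set w \<subseteq> S \<and> foldr (\<otimes>) w \<one> = x}"
  by (rule finite_subset[OF _ words_fin[of n]]) auto

lemma cw_Suc:
  assumes x: "x \<in> carrier H"
  shows "cw (Suc n) x = (\<Sum>s\<in>S. cw n (inv s \<otimes> x))"
proof -
  let ?W = "\<lambda>s. {w. length w = n \<and> set w \<subseteq> S \<and> foldr (\<otimes>) w \<one> = inv s \<otimes> x}"
  have key: "\<And>s w'. s \<in> S \<Longrightarrow> set w' \<subseteq> S \<Longrightarrow> (s \<otimes> foldr (\<otimes>) w' \<one> = x) = (foldr (\<otimes>) w' \<one> = inv s \<otimes> x)"
    using foldr_carrier S_sub x by (metis inv_solve_left subsetD)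
  have eq: "{w. length w = Suc n \<and> set w \<subseteq> S \<and> foldr (\<otimes>) w \<one> = x} = (\<Union>s\<in>S. (Cons s) ` ?W s)"
  proof -
    have "w \<in> {w. length w = Suc n \<and> set w \<subseteq> S \<and> foldr (\<otimes>) w \<one> = x} \<longleftrightarrow> w \<in> (\<Union>s\<in>S. (Cons s) ` ?W s)" for w
    proof (cases w)
      case (Cons s w')
      show ?thesis unfolding Cons using key[of s w'] by auto
    qed auto
    thus ?thesis by blast
  qed
  have "cw (Suc n) x = card (\<Union>s\<in>S. (Cons s) ` ?W s)"
    unfolding cw_def eq ..
  also have "\<dots> = (\<Sum>s\<in>S. card ((Cons s) ` ?W s))"
    by (rule card_UN_disjoint) (use S_fin cw_fin in auto)
  also have "\<dots> = (\<Sum>s\<in>S. cw n (inv s \<otimes> x))"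
    unfolding cw_def by (intro sum.cong refl card_image) auto
  finally show ?thesis .
qed

lemma cw_0: "cw 0 x = (if x = \<one> then 1 else 0)"
proof -
  have "{w::'a list. length w = 0 \<and> set w \<subseteq> S \<and> foldr (\<otimes>) w \<one> = x} = (if x = \<one> then {[]} else {})"
    by auto
  thus ?thesis unfolding cw_def by simp
qed

lemma p_0: "p 0 x = (if x = \<one> then 1 else 0)"
  by (simp add: p_def cw_0)

lemma p_nonneg: "p n x \<ge> 0"
  using k_pos by (simp add: p_def)

lemma p_Suc: "x \<in> carrier H \<Longrightarrow> p (Suc n) x = P (p n) x"
  unfolding p_def P_def cw_Suc
  by (simp add: sum_divide_distrib[symmetric] field_simps)

lemma p_supp: "p n x \<noteq> 0 \<Longrightarrow> x \<in> (\<lambda>w. foldr (\<otimes>) w \<one>) ` {w. length w = n \<and> set w \<subseteq> S}"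
proof -
  assume "p n x \<noteq> 0"
  hence "cw n x \<noteq> 0" by (simp add: p_def)
  hence "{w. length w = n \<and> set w \<subseteq> S \<and> foldr (\<otimes>) w \<one> = x} \<noteq> {}"
    unfolding cw_def by (metis card.empty)
  thus ?thesis by blast
qed

lemma p_supp_carrier: "p n x \<noteq> 0 \<Longrightarrow> x \<in> carrier H"
  using p_supp foldr_carrier by blast

lemma p_supp_fin: "finite {x. p n x \<noteq> 0}"
  by (rule finite_subset[OF _ finite_imageI[OF words_fin]]) (use p_supp in blast)

lemma p_return: "p n \<one> = return_prob H S n"
  by (simp add: p_def return_prob_def return_words_def cw_def k_def)

end

context rwalk begin

definition fs :: "('a \<Rightarrow> real) \<Rightarrow> bool" where
  "fs f \<longleftrightarrow> finite {x\<in>carrier H. f x \<noteq> 0}"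

lemma fs_summable: "fs f \<Longrightarrow> f summable_on carrier H"
proof -
  assume "fs f"
  hence "f summable_on {x\<in>carrier H. f x \<noteq> 0}" by (simp add: fs_def)
  thus ?thesis by (subst summable_on_cong_neutral[where T="{x\<in>carrier H. f x \<noteq> 0}" and g=f]) auto
qed

lemma fs_infsum:
  assumes "finite T" "T \<subseteq> carrier H" "\<And>x. x \<in> carrier H \<Longrightarrow> x \<notin> T \<Longrightarrow> f x = 0"
  shows "infsum f (carrier H) = sum f T"
proof -
  have "infsum f (carrier H) = infsum f T"
    by (rule infsum_cong_neutral) (use assms in auto)
  thus ?thesis using assms by simp
qed

lemma fs_mono: "fs g \<Longrightarrow> (\<And>x. x \<in> carrier H \<Longrightarrow> g x = 0 \<Longrightarrow> f x = 0) \<Longrightarrow> fs f"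
  unfolding fs_def by (erule finite_subset[rotated]) auto

lemma fs_mult_right: "fs g \<Longrightarrow> fs (\<lambda>x. f x * g x)"
  by (erule fs_mono) auto

lemma fs_mult_left: "fs g \<Longrightarrow> fs (\<lambda>x. g x * f x)"
  by (erule fs_mono) auto

lemma fs_add: "fs f \<Longrightarrow> fs g \<Longrightarrow> fs (\<lambda>x. f x + g x)"
  unfolding fs_def by (rule finite_subset[of _ "{x\<in>carrier H. f x \<noteq> 0} \<union> {x\<in>carrier H. g x \<noteq> 0}"]) auto

lemma fs_diff: "fs f \<Longrightarrow> fs g \<Longrightarrow> fs (\<lambda>x. f x - g x)"
  unfolding fs_def by (rule finite_subset[of _ "{x\<in>carrier H. f x \<noteq> 0} \<union> {x\<in>carrier H. g x \<noteq> 0}"]) auto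

lemma fs_sum: "finite A \<Longrightarrow> (\<And>i. i \<in> A \<Longrightarrow> fs (f i)) \<Longrightarrow> fs (\<lambda>x. \<Sum>i\<in>A. f i x)"
proof (induction A rule: finite_induct)
  case empty thus ?case by (simp add: fs_def)
next
  case (insert a A)
  thus ?case by (simp add: fs_add)
qed

lemma fs_transl:
  assumes s: "s \<in> carrier H" and g: "fs g"
  shows "fs (\<lambda>x. g (s \<otimes> x))"
  unfolding fs_def
proof (rule finite_subset[OF _ finite_imageI[OF g[unfolded fs_def], of "\<lambda>y. inv s \<otimes> y"]])
  show "{x \<in> carrier H. g (s \<otimes> x) \<noteq> 0} \<subseteq> (\<lambda>y. inv s \<otimes> y) ` {x \<in> carrier H. g x \<noteq> 0}"
  proof
    fix x assume x: "x \<in> {x \<in> carrier H. g (s \<otimes> x) \<noteq> 0}"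
    hence "x = inv s \<otimes> (s \<otimes> x)" using s by (simp add: m_assoc[symmetric])
    thus "x \<in> (\<lambda>y. inv s \<otimes> y) ` {x \<in> carrier H. g x \<noteq> 0}" using x s by auto
  qed
qed

lemma fs_P: "fs g \<Longrightarrow> fs (P g)"
proof -
  assume g: "fs g"
  have "fs (\<lambda>x. \<Sum>s\<in>S. g (inv s \<otimes> x))"
    by (rule fs_sum[OF S_fin]) (use g fs_transl S_sub in blast)
  hence "fs (\<lambda>x. (\<Sum>s\<in>S. g (inv s \<otimes> x)) * (1/k))" by (rule fs_mult_left)
  thus ?thesis unfolding P_def by simp
qed

lemma fs_p: "fs (p n)"
  unfolding fs_def by (rule finite_subset[OF _ p_supp_fin[of n]]) auto

lemma bij_mult: "s \<in> carrier H \<Longrightarrow> bij_betw (\<lambda>x. s \<otimes> x) (carrier H) (carrier H)"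
  by (rule bij_betw_byWitness[where f'="\<lambda>x. inv s \<otimes> x"])
     (auto simp: m_assoc[symmetric])

lemma reindex: "s \<in> carrier H \<Longrightarrow> infsum (\<lambda>x. f (s \<otimes> x)) (carrier H) = infsum f (carrier H)"
  by (rule infsum_reindex_bij_betw[OF bij_mult])

lemma reindex_summable: "s \<in> carrier H \<Longrightarrow> (\<lambda>x. f (s \<otimes> x)) summable_on (carrier H) \<longleftrightarrow> f summable_on (carrier H)"
  by (rule summable_on_reindex_bij_betw[OF bij_mult])

lemma infsum_sum_fin:
  fixes f :: "'i \<Rightarrow> 'c \<Rightarrow> real"
  assumes "finite A" "\<And>i. i \<in> A \<Longrightarrow> f i summable_on X"
  shows "infsum (\<lambda>x. \<Sum>i\<in>A. f i x) X = (\<Sum>i\<in>A. infsum (f i) X) \<and> (\<lambda>x. \<Sum>i\<in>A. f i x) summable_on X"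
  using assms
proof (induction A rule: finite_induct)
  case empty thus ?case by simp
next
  case (insert a A)
  hence IH: "infsum (\<lambda>x. \<Sum>i\<in>A. f i x) X = (\<Sum>i\<in>A. infsum (f i) X)" "(\<lambda>x. \<Sum>i\<in>A. f i x) summable_on X"
    and fa: "f a summable_on X" by auto
  show ?case using insert(1,2) IH fa
    by (simp add: infsum_add summable_on_add)
qed

lemma sum_S_inv: "(\<Sum>s\<in>S. F (inv s)) = (\<Sum>s\<in>S. F s)"
proof (rule sum.reindex_bij_betw[where h="\<lambda>s. inv s"])
  show "bij_betw (\<lambda>s. inv s) S S"
    by (rule bij_betw_byWitness[where f'="\<lambda>s. inv s"]) (use S_sym S_sub in auto)
qed

lemma swap:
  assumes b: "fs b"
  shows "(\<Sum>s\<in>S. infsum (\<lambda>x. a (inv s \<otimes> x) * b x) (carrier H))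
       = (\<Sum>s\<in>S. infsum (\<lambda>x. a x * b (inv s \<otimes> x)) (carrier H))"
proof -
  have "infsum (\<lambda>x. a (inv s \<otimes> x) * b x) (carrier H) = infsum (\<lambda>y. a y * b (s \<otimes> y)) (carrier H)"
    if s: "s \<in> S" for s
  proof -
    have sc: "s \<in> carrier H" using s S_sub by auto
    have "infsum (\<lambda>x. a (inv s \<otimes> x) * b x) (carrier H)
        = infsum (\<lambda>y. a (inv s \<otimes> (s \<otimes> y)) * b (s \<otimes> y)) (carrier H)"
      using reindex[OF sc, of "\<lambda>x. a (inv s \<otimes> x) * b x"] by simp
    also have "\<dots> = infsum (\<lambda>y. a y * b (s \<otimes> y)) (carrier H)"
      by (rule infsum_cong) (use sc in \<open>simp add: m_assoc[symmetric]\<close>)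
    finally show ?thesis .
  qed
  hence "(\<Sum>s\<in>S. infsum (\<lambda>x. a (inv s \<otimes> x) * b x) (carrier H))
      = (\<Sum>s\<in>S. infsum (\<lambda>y. a y * b (s \<otimes> y)) (carrier H))" by simp
  also have "\<dots> = (\<Sum>s\<in>S. infsum (\<lambda>y. a y * b (inv s \<otimes> y)) (carrier H))"
    by (rule sum_S_inv[symmetric])
  finally show ?thesis .
qed

lemma summ_transl: "fs b \<Longrightarrow> s \<in> S \<Longrightarrow> (\<lambda>x. a x * b (inv s \<otimes> x)) summable_on carrier H"
  using S_sub by (intro fs_summable fs_mult_right fs_transl) auto

lemma summ_transl': "fs b \<Longrightarrow> s \<in> S \<Longrightarrow> (\<lambda>x. a (inv s \<otimes> x) * b x) summable_on carrier H"
  using S_sub by (intro fs_summable fs_mult_right fs_transl) auto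

lemma inner_P:
  assumes b: "fs b"
  shows "infsum (\<lambda>x. a x * P b x) (carrier H) = (\<Sum>s\<in>S. infsum (\<lambda>x. a x * b (inv s \<otimes> x)) (carrier H)) / k"
proof -
  have "infsum (\<lambda>x. a x * P b x) (carrier H) = infsum (\<lambda>x. (1/k) * (\<Sum>s\<in>S. a x * b (inv s \<otimes> x))) (carrier H)"
    by (simp add: P_def sum_distrib_left sum_divide_distrib)
  also have "\<dots> = (1/k) * infsum (\<lambda>x. \<Sum>s\<in>S. a x * b (inv s \<otimes> x)) (carrier H)"
    by (rule infsum_cmult_right) (use infsum_sum_fin[OF S_fin, of "\<lambda>s x. a x * b (inv s \<otimes> x)"] summ_transl[OF b] in simp)
  also have "\<dots> = (1/k) * (\<Sum>s\<in>S. infsum (\<lambda>x. a x * b (inv s \<otimes> x)) (carrier H))"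
    using infsum_sum_fin[OF S_fin, of "\<lambda>s x. a x * b (inv s \<otimes> x)"] summ_transl[OF b] by simp
  finally show ?thesis by simp
qed

lemma P_inner:
  assumes b: "fs b"
  shows "infsum (\<lambda>x. P a x * b x) (carrier H) = (\<Sum>s\<in>S. infsum (\<lambda>x. a (inv s \<otimes> x) * b x) (carrier H)) / k"
proof -
  have "infsum (\<lambda>x. P a x * b x) (carrier H) = infsum (\<lambda>x. (1/k) * (\<Sum>s\<in>S. a (inv s \<otimes> x) * b x)) (carrier H)"
    by (simp add: P_def sum_distrib_right sum_divide_distrib)
  also have "\<dots> = (1/k) * infsum (\<lambda>x. \<Sum>s\<in>S. a (inv s \<otimes> x) * b x) (carrier H)"
    by (rule infsum_cmult_right) (use infsum_sum_fin[OF S_fin, of "\<lambda>s x. a (inv s \<otimes> x) * b x"] summ_transl'[OF b] in simp)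
  also have "\<dots> = (1/k) * (\<Sum>s\<in>S. infsum (\<lambda>x. a (inv s \<otimes> x) * b x) (carrier H))"
    using infsum_sum_fin[OF S_fin, of "\<lambda>s x. a (inv s \<otimes> x) * b x"] summ_transl'[OF b] by simp
  finally show ?thesis by simp
qed

lemma selfadj:
  assumes b: "fs b"
  shows "infsum (\<lambda>x. P a x * b x) (carrier H) = infsum (\<lambda>x. a x * P b x) (carrier H)"
  unfolding P_inner[OF b] inner_P[OF b] swap[OF b] ..

end

lemma infsum_diff':
  fixes f g :: "'c \<Rightarrow> real"
  assumes "f summable_on A" "g summable_on A"
  shows "infsum (\<lambda>x. f x - g x) A = infsum f A - infsum g A"
proof -
  have "infsum (\<lambda>x. f x + (- g x)) A = infsum f A + infsum (\<lambda>x. - g x) A"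
    by (rule infsum_add) (use assms summable_on_uminus in auto)
  thus ?thesis by (simp add: infsum_uminus)
qed

lemma summable_diff':
  fixes f g :: "'c \<Rightarrow> real"
  assumes "f summable_on A" "g summable_on A"
  shows "(\<lambda>x. f x - g x) summable_on A"
proof -
  have "(\<lambda>x. f x + (- g x)) summable_on A"
    by (rule summable_on_add) (use assms summable_on_uminus in auto)
  thus ?thesis by simp
qed

context rwalk begin

lemma inner_p0: "infsum (\<lambda>x. f x * p 0 x) (carrier H) = f \<one>"
  by (subst fs_infsum[of "{\<one>}"]) (auto simp: p_0)

lemma energy:
  assumes g: "fs g"
  shows "(\<Sum>s\<in>S. infsum (\<lambda>x. (v (inv s \<otimes> x) - v x) * (g (inv s \<otimes> x) - g x)) (carrier H))
       = 2 * k * infsum (\<lambda>x. v x * (g x - P g x)) (carrier H)"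
proof -
  define I0 where "I0 = infsum (\<lambda>x. v x * g x) (carrier H)"
  define T2 where "T2 s = infsum (\<lambda>x. v (inv s \<otimes> x) * g x) (carrier H)" for s
  define T3 where "T3 s = infsum (\<lambda>x. v x * g (inv s \<otimes> x)) (carrier H)" for s
  have each: "infsum (\<lambda>x. (v (inv s \<otimes> x) - v x) * (g (inv s \<otimes> x) - g x)) (carrier H)
      = 2 * I0 - T2 s - T3 s" if s: "s \<in> S" for s
  proof -
    have sc: "inv s \<in> carrier H" using s S_sub by auto
    have f1: "fs (\<lambda>x. v (inv s \<otimes> x) * g (inv s \<otimes> x))"
      by (intro fs_mult_right fs_transl sc g)
    have f2: "fs (\<lambda>x. v (inv s \<otimes> x) * g x)" by (intro fs_mult_right g)
    have f3: "fs (\<lambda>x. v x * g (inv s \<otimes> x))" by (intro fs_mult_right fs_transl sc g)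
    have f4: "fs (\<lambda>x. v x * g x)" by (intro fs_mult_right g)
    have "infsum (\<lambda>x. (v (inv s \<otimes> x) - v x) * (g (inv s \<otimes> x) - g x)) (carrier H)
        = infsum (\<lambda>x. ((v (inv s \<otimes> x) * g (inv s \<otimes> x) - v (inv s \<otimes> x) * g x) - v x * g (inv s \<otimes> x)) + v x * g x) (carrier H)"
      by (rule infsum_cong) (simp add: algebra_simps)
    also have "\<dots> = ((infsum (\<lambda>x. v (inv s \<otimes> x) * g (inv s \<otimes> x)) (carrier H) - T2 s) - T3 s) + I0"
      unfolding T2_def T3_def I0_def
      using f1 f2 f3 f4
      by (simp add: infsum_add infsum_diff' summable_diff' summable_on_add fs_summable)
    also have "infsum (\<lambda>x. v (inv s \<otimes> x) * g (inv s \<otimes> x)) (carrier H) = I0"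
      unfolding I0_def using reindex[OF sc, of "\<lambda>x. v x * g x"] by simp
    finally show ?thesis by simp
  qed
  define X where "X = infsum (\<lambda>x. v x * P g x) (carrier H)"
  have "(\<Sum>s\<in>S. infsum (\<lambda>x. (v (inv s \<otimes> x) - v x) * (g (inv s \<otimes> x) - g x)) (carrier H))
      = (\<Sum>s\<in>S. 2 * I0 - T2 s - T3 s)" using each by simp
  also have "\<dots> = k * (2 * I0) - sum T2 S - sum T3 S"
    by (simp add: sum_subtractf k_def)
  also have "sum T2 S = sum T3 S" unfolding T2_def T3_def by (rule swap[OF g])
  also have "sum T3 S = k * X"
    unfolding T3_def X_def inner_P[OF g] using k_pos by simp
  finally have A: "(\<Sum>s\<in>S. infsum (\<lambda>x. (v (inv s \<otimes> x) - v x) * (g (inv s \<otimes> x) - g x)) (carrier H))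
      = k * (2 * I0) - k * X - k * X" .
  have "infsum (\<lambda>x. v x * (g x - P g x)) (carrier H) = infsum (\<lambda>x. v x * g x - v x * P g x) (carrier H)"
    by (simp add: algebra_simps)
  also have "\<dots> = I0 - X"
    unfolding I0_def X_def
    by (rule infsum_diff') (intro fs_summable fs_mult_right fs_P g)+
  finally have B: "infsum (\<lambda>x. v x * (g x - P g x)) (carrier H) = I0 - X" .
  show ?thesis unfolding A B by (simp add: algebra_simps)
qed

lemma pconv: "infsum (\<lambda>x. p m x * p n x) (carrier H) = p (m + n) \<one>"
proof (induction m arbitrary: n)
  case 0
  show ?case using inner_p0[of "p n"] by (simp add: mult.commute)
next
  case (Suc m)
  have "infsum (\<lambda>x. p (Suc m) x * p n x) (carrier H) = infsum (\<lambda>x. P (p m) x * p n x) (carrier H)"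
    by (rule infsum_cong) (simp add: p_Suc)
  also have "\<dots> = infsum (\<lambda>x. p m x * P (p n) x) (carrier H)"
    by (rule selfadj[OF fs_p])
  also have "\<dots> = infsum (\<lambda>x. p m x * p (Suc n) x) (carrier H)"
    by (rule infsum_cong) (simp add: p_Suc)
  also have "\<dots> = p (Suc m + n) \<one>" using Suc[of "Suc n"] by simp
  finally show ?case .
qed

lemma cs:
  assumes b: "fs b" and a: "(\<lambda>x. (a x)\<^sup>2) summable_on carrier H"
  shows "\<bar>infsum (\<lambda>x. a x * b x) (carrier H)\<bar>
     \<le> sqrt (infsum (\<lambda>x. (a x)\<^sup>2) (carrier H)) * sqrt (infsum (\<lambda>x. (b x)\<^sup>2) (carrier H))"
proof -
  define T where "T = {x\<in>carrier H. b x \<noteq> 0}"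
  have T: "finite T" "T \<subseteq> carrier H" using b by (auto simp: T_def fs_def)
  have e1: "infsum (\<lambda>x. a x * b x) (carrier H) = (\<Sum>x\<in>T. a x * b x)"
    by (rule fs_infsum) (use T in \<open>auto simp: T_def\<close>)
  have e2: "infsum (\<lambda>x. (b x)\<^sup>2) (carrier H) = (\<Sum>x\<in>T. (b x)\<^sup>2)"
    by (rule fs_infsum) (use T in \<open>auto simp: T_def\<close>)
  have e3: "(\<Sum>x\<in>T. (a x)\<^sup>2) \<le> infsum (\<lambda>x. (a x)\<^sup>2) (carrier H)"
  proof -
    have "infsum (\<lambda>x. (a x)\<^sup>2) T \<le> infsum (\<lambda>x. (a x)\<^sup>2) (carrier H)"
      by (rule infsum_mono_neutral) (use T a in auto)
    thus ?thesis using T by simp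
  qed
  have "\<bar>\<Sum>x\<in>T. a x * b x\<bar> \<le> (\<Sum>x\<in>T. \<bar>a x\<bar> * \<bar>b x\<bar>)"
    by (metis (no_types, lifting) abs_mult sum.cong sum_abs)
  also have "\<dots> \<le> L2_set a T * L2_set b T" by (rule L2_set_mult_ineq)
  also have "\<dots> \<le> sqrt (infsum (\<lambda>x. (a x)\<^sup>2) (carrier H)) * sqrt (infsum (\<lambda>x. (b x)\<^sup>2) (carrier H))"
    unfolding L2_set_def e2
    by (intro mult_right_mono real_sqrt_le_mono e3) (auto intro: sum_nonneg)
  finally show ?thesis unfolding e1 .
qed

end

context rwalk begin

lemma capacity:
  assumes summ: "summable (\<lambda>n. p n \<one>)"
    and w2: "(\<lambda>x. (w x)\<^sup>2) summable_on carrier H"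
    and wA: "\<And>s. s \<in> S \<Longrightarrow> (\<lambda>x. (w (inv s \<otimes> x) - w x)\<^sup>2) summable_on carrier H"
  shows "\<bar>w \<one>\<bar> \<le> sqrt (\<Sum>s\<in>S. infsum (\<lambda>x. (w (inv s \<otimes> x) - w x)\<^sup>2) (carrier H)) * sqrt (2 * k * (\<Sum>n. p n \<one>)) / (2 * k)
      + sqrt (infsum (\<lambda>x. (w x)\<^sup>2) (carrier H)) * sqrt (p (2 * N) \<one>)"
proof -
  define C where "C = (\<Sum>n. p n \<one>)"
  define g where "g = (\<lambda>x. \<Sum>n<N. p n x)"
  have fsg: "fs g" unfolding g_def by (intro fs_sum fs_p) auto
  have gnn: "g x \<ge> 0" for x unfolding g_def by (intro sum_nonneg p_nonneg)
  have gP: "g x - P g x = p 0 x - p N x" if x: "x \<in> carrier H" for x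
  proof -
    have "P g x = (\<Sum>s\<in>S. \<Sum>n<N. p n (inv s \<otimes> x)) / k" by (simp add: P_def g_def)
    also have "\<dots> = (\<Sum>n<N. \<Sum>s\<in>S. p n (inv s \<otimes> x)) / k" by (simp add: sum.swap[of _ S])
    also have "\<dots> = (\<Sum>n<N. P (p n) x)" by (simp add: P_def sum_divide_distrib)
    also have "\<dots> = (\<Sum>n<N. p (Suc n) x)" using x by (simp add: p_Suc)
    finally have "g x - P g x = (\<Sum>n<N. p n x - p (Suc n) x)" by (simp add: g_def sum_subtractf)
    also have "\<dots> = p 0 x - p N x" by (rule sum_lessThan_telescope')
    finally show ?thesis .
  qed
  have decomp: "infsum (\<lambda>x. v x * (g x - P g x)) (carrier H) = v \<one> - infsum (\<lambda>x. v x * p N x) (carrier H)" for v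
  proof -
    have "infsum (\<lambda>x. v x * (g x - P g x)) (carrier H) = infsum (\<lambda>x. v x * p 0 x - v x * p N x) (carrier H)"
      by (rule infsum_cong) (simp add: gP algebra_simps)
    also have "\<dots> = infsum (\<lambda>x. v x * p 0 x) (carrier H) - infsum (\<lambda>x. v x * p N x) (carrier H)"
      by (rule infsum_diff') (intro fs_summable fs_mult_right fs_p)+
    finally show ?thesis by (simp add: inner_p0)
  qed
  define E where "E s = infsum (\<lambda>x. (w (inv s \<otimes> x) - w x) * (g (inv s \<otimes> x) - g x)) (carrier H)" for s
  define A where "A s = infsum (\<lambda>x. (w (inv s \<otimes> x) - w x)\<^sup>2) (carrier H)" for s
  define B where "B s = infsum (\<lambda>x. (g (inv s \<otimes> x) - g x)\<^sup>2) (carrier H)" for s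
  have fsb: "fs (\<lambda>x. g (inv s \<otimes> x) - g x)" if "s \<in> S" for s
    using that S_sub by (intro fs_diff fs_transl fsg) auto
  have An: "A s \<ge> 0" for s unfolding A_def by (rule infsum_nonneg) auto
  have Bn: "B s \<ge> 0" for s unfolding B_def by (rule infsum_nonneg) auto
  have En: "\<bar>E s\<bar> \<le> sqrt (A s) * sqrt (B s)" if s: "s \<in> S" for s
    unfolding E_def A_def B_def by (rule cs[OF fsb[OF s] wA[OF s]])
  have L2: "L2_set (\<lambda>s. sqrt (f s)) S = sqrt (sum f S)" if "\<And>s. f s \<ge> 0" for f :: "'a \<Rightarrow> real"
    unfolding L2_set_def using that by simp
  have "\<bar>sum E S\<bar> \<le> (\<Sum>s\<in>S. \<bar>E s\<bar>)" by (rule sum_abs)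
  also have "\<dots> \<le> (\<Sum>s\<in>S. \<bar>sqrt (A s)\<bar> * \<bar>sqrt (B s)\<bar>)"
    by (rule sum_mono) (use En An Bn in simp)
  also have "\<dots> \<le> L2_set (\<lambda>s. sqrt (A s)) S * L2_set (\<lambda>s. sqrt (B s)) S" by (rule L2_set_mult_ineq)
  also have "\<dots> = sqrt (sum A S) * sqrt (sum B S)" using L2[of A] L2[of B] An Bn by simp
  finally have cs1: "\<bar>sum E S\<bar> \<le> sqrt (sum A S) * sqrt (sum B S)" .
  have Ew: "sum E S = 2 * k * (w \<one> - infsum (\<lambda>x. w x * p N x) (carrier H))"
    unfolding E_def energy[OF fsg] decomp ..
  have "sum B S = (\<Sum>s\<in>S. infsum (\<lambda>x. (g (inv s \<otimes> x) - g x) * (g (inv s \<otimes> x) - g x)) (carrier H))"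
    unfolding B_def by (simp add: power2_eq_square)
  also have "\<dots> = 2 * k * (g \<one> - infsum (\<lambda>x. g x * p N x) (carrier H))"
    unfolding energy[OF fsg] decomp ..
  also have "\<dots> \<le> 2 * k * g \<one>"
  proof -
    have "infsum (\<lambda>x. g x * p N x) (carrier H) \<ge> 0"
      by (rule infsum_nonneg) (simp add: gnn p_nonneg)
    thus ?thesis using k_pos by simp
  qed
  also have "\<dots> \<le> 2 * k * C"
  proof -
    have "g \<one> \<le> C" unfolding g_def C_def
      by (rule sum_le_suminf[OF summ]) (auto simp: p_nonneg)
    thus ?thesis using k_pos by simp
  qed
  finally have Bb: "sum B S \<le> 2 * k * C" .
  define r where "r = infsum (\<lambda>x. w x * p N x) (carrier H)"
  have "2 * k * \<bar>w \<one> - r\<bar> \<le> sqrt (sum A S) * sqrt (2 * k * C)"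
  proof -
    have "2 * k * \<bar>w \<one> - r\<bar> = \<bar>sum E S\<bar>" using k_pos by (simp add: Ew r_def abs_mult)
    also have "\<dots> \<le> sqrt (sum A S) * sqrt (sum B S)" by (rule cs1)
    also have "\<dots> \<le> sqrt (sum A S) * sqrt (2 * k * C)"
      by (intro mult_left_mono real_sqrt_le_mono Bb) (auto intro: sum_nonneg An)
    finally show ?thesis .
  qed
  hence t1: "\<bar>w \<one> - r\<bar> \<le> sqrt (sum A S) * sqrt (2 * k * C) / (2 * k)"
    using k_pos by (simp add: field_simps)
  have "\<bar>r\<bar> \<le> sqrt (infsum (\<lambda>x. (w x)\<^sup>2) (carrier H)) * sqrt (infsum (\<lambda>x. (p N x)\<^sup>2) (carrier H))"
    unfolding r_def by (rule cs[OF fs_p w2])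
  also have "infsum (\<lambda>x. (p N x)\<^sup>2) (carrier H) = p (2 * N) \<one>"
    using pconv[of N N] by (simp add: power2_eq_square mult_2)
  finally have t2: "\<bar>r\<bar> \<le> sqrt (infsum (\<lambda>x. (w x)\<^sup>2) (carrier H)) * sqrt (p (2 * N) \<one>)" .
  have "\<bar>w \<one>\<bar> \<le> \<bar>w \<one> - r\<bar> + \<bar>r\<bar>" by simp
  thus ?thesis using t1 t2 unfolding A_def C_def by linarith
qed

end

context rwalk begin

lemma p_small:
  assumes summ: "summable (\<lambda>n. p n \<one>)" and d: "d > 0"
  shows "\<exists>N. p (2 * N) \<one> < d"
proof -
  have "(\<lambda>n. p n \<one>) \<longlonglongrightarrow> 0" by (rule summable_LIMSEQ_zero[OF summ])
  hence "\<forall>\<^sub>F n in sequentially. dist (p n \<one>) 0 < d" using d by (rule tendstoD)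
  then obtain M where M: "\<And>n. n \<ge> M \<Longrightarrow> dist (p n \<one>) 0 < d" by (auto simp: eventually_sequentially)
  have "dist (p (2 * M) \<one>) 0 < d" by (rule M) simp
  thus ?thesis using p_nonneg by auto
qed

lemma H_infinite:
  assumes summ: "summable (\<lambda>n. p n \<one>)"
  shows "infinite (carrier H)"
proof
  assume fin: "finite (carrier H)"
  define c where "c = real (card (carrier H))"
  have c0: "c \<ge> 0" by (simp add: c_def)
  obtain N where N: "p (2 * N) \<one> < 1 / (c + 1)" using p_small[OF summ, of "1/(c+1)"] c0 by auto
  have cap: "\<bar>(\<lambda>x. 1::real) \<one>\<bar> \<le> sqrt (\<Sum>s\<in>S. infsum (\<lambda>x. ((\<lambda>x. 1::real) (inv s \<otimes> x) - (\<lambda>x. 1::real) x)\<^sup>2) (carrier H)) * sqrt (2 * k * (\<Sum>n. p n \<one>)) / (2 * k)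
      + sqrt (infsum (\<lambda>x. ((\<lambda>x. 1::real) x)\<^sup>2) (carrier H)) * sqrt (p (2 * N) \<one>)"
    by (rule capacity[OF summ]) (use fin in auto)
  hence "1 \<le> sqrt c * sqrt (p (2 * N) \<one>)" using fin by (simp add: c_def)
  also have "\<dots> = sqrt (c * p (2 * N) \<one>)" by (simp add: real_sqrt_mult)
  also have "\<dots> < 1"
  proof -
    have "c * p (2 * N) \<one> \<le> c * (1 / (c + 1))" using N c0 by (intro mult_left_mono) auto
    also have "\<dots> < 1" using c0 by (simp add: field_simps)
    finally show ?thesis by simp
  qed
  finally show False by simp
qed

lemma foldr_mult: "set w1 \<subseteq> S \<Longrightarrow> y \<in> carrier H \<Longrightarrow>
    foldr (\<otimes>) w1 y = foldr (\<otimes>) w1 \<one> \<otimes> y"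
  by (induction w1) (use S_sub foldr_carrier in \<open>auto simp: m_assoc\<close>)

lemma generate_words: "generate H S \<subseteq> (\<lambda>w. foldr (\<otimes>) w \<one>) ` lists S"
proof
  fix x assume "x \<in> generate H S"
  thus "x \<in> (\<lambda>w. foldr (\<otimes>) w \<one>) ` lists S"
  proof (induction rule: generate.induct)
    case one
    show ?case by (rule image_eqI[of _ _ "[]"]) auto
  next
    case (incl h)
    show ?case by (rule image_eqI[of _ _ "[h]"]) (use incl S_sub in auto)
  next
    case (inv h)
    show ?case by (rule image_eqI[of _ _ "[inv h]"]) (use inv S_sub S_sym in auto)
  next
    case (eng h1 h2)
    then obtain w1 w2 where "w1 \<in> lists S" "w2 \<in> lists S" "h1 = foldr (\<otimes>) w1 \<one>" "h2 = foldr (\<otimes>) w2 \<one>"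
      by auto
    hence w: "set w1 \<subseteq> S" "set w2 \<subseteq> S" "h1 = foldr (\<otimes>) w1 \<one>" "h2 = foldr (\<otimes>) w2 \<one>" by auto
    have "foldr (\<otimes>) (w1 @ w2) \<one> = foldr (\<otimes>) w1 (foldr (\<otimes>) w2 \<one>)" by simp
    also have "\<dots> = h1 \<otimes> h2" using w foldr_mult[OF w(1) foldr_carrier[OF w(2)]] by simp
    finally show ?case using w by (intro image_eqI[of _ _ "w1 @ w2"]) auto
  qed
qed

lemma cap_cor:
  assumes summ: "summable (\<lambda>n. p n \<one>)" and d: "d \<ge> 0"
    and Ad: "(\<Sum>s\<in>S. A s) \<le> k * d\<^sup>2"
  shows "sqrt (\<Sum>s\<in>S. A s) * sqrt (2 * k * (\<Sum>n. p n \<one>)) / (2 * k) \<le> d * sqrt (2 * (\<Sum>n. p n \<one>)) / 2"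
proof -
  define C where "C = (\<Sum>n. p n \<one>)"
  have C0: "C \<ge> 0" unfolding C_def by (rule suminf_nonneg[OF summ]) (simp add: p_nonneg)
  have "sqrt (\<Sum>s\<in>S. A s) * sqrt (2 * k * C) \<le> sqrt (k * d\<^sup>2) * sqrt (2 * k * C)"
    by (intro mult_right_mono real_sqrt_le_mono Ad) (use C0 k_pos in auto)
  also have "\<dots> = sqrt (k * k * (d\<^sup>2 * (2 * C)))" by (simp add: real_sqrt_mult[symmetric] algebra_simps)
  also have "\<dots> = k * (d * sqrt (2 * C))"
    using k_pos d C0 mult_nonneg_nonneg[OF C0, of k] by (simp add: real_sqrt_mult)
  finally have "sqrt (\<Sum>s\<in>S. A s) * sqrt (2 * k * C) / (2 * k) \<le> k * (d * sqrt (2 * C)) / (2 * k)"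
    using k_pos by (intro divide_right_mono) auto
  also have "\<dots> = d * sqrt (2 * C) / 2" using k_pos by simp
  finally show ?thesis unfolding C_def .
qed

end

lemma sum_fun_apply: "finite B \<Longrightarrow> (\<Sum>w\<in>B. f w) i = (\<Sum>w\<in>B. f w i)"
  for f :: "'x \<Rightarrow> nat \<Rightarrow> complex"
  by (induction B rule: finite_induct) auto

definition csc :: "complex \<Rightarrow> (nat \<Rightarrow> complex) \<Rightarrow> (nat \<Rightarrow> complex)" where
  "csc c u = (\<lambda>i. c * u i)"

interpretation CV: vector_space csc
  by unfold_locales (auto simp: csc_def fun_eq_iff algebra_simps)

lemma dim_contra:
  fixes B :: "(nat \<Rightarrow> complex) set" and M :: "nat set"
  assumes B: "finite B" and M: "infinite M"
    and sp: "\<And>m. m \<in> M \<Longrightarrow> \<exists>c. (\<lambda>i. if i = m then 1 else 0) = (\<lambda>i. \<Sum>w\<in>B. c w * w i)"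
  shows False
proof -
  define e :: "nat \<Rightarrow> nat \<Rightarrow> complex" where "e m = (\<lambda>i. if i = m then 1 else 0)" for m
  obtain M' where M': "M' \<subseteq> M" "finite M'" "card M' = Suc (card B)"
    using infinite_arbitrarily_large[OF M] by blast
  have inj: "inj_on e M'" unfolding e_def inj_on_def by (metis one_neq_zero)
  have span: "e ` M' \<subseteq> CV.span B"
  proof
    fix x assume "x \<in> e ` M'"
    then obtain m where m: "m \<in> M" "x = e m" using M' by auto
    obtain c where c: "e m = (\<lambda>i. \<Sum>w\<in>B. c w * w i)" using sp[OF m(1)] unfolding e_def by blast
    have "e m = (\<Sum>w\<in>B. csc (c w) w)"
      unfolding c by (rule ext) (simp add: sum_fun_apply[OF B] csc_def)
    thus "x \<in> CV.span B" unfolding m CV.span_finite[OF B] by auto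
  qed
  have ind: "CV.independent (e ` M')"
  proof
    assume "CV.dependent (e ` M')"
    then obtain u where u: "\<exists>v\<in>e ` M'. u v \<noteq> 0" "(\<Sum>v\<in>e ` M'. csc (u v) v) = 0"
      using CV.dependent_finite[of "e ` M'"] M' by auto
    then obtain m where m: "m \<in> M'" "u (e m) \<noteq> 0" by auto
    have "0 = (\<Sum>v\<in>e ` M'. csc (u v) v) m" using u(2) by simp
    also have "\<dots> = (\<Sum>v\<in>e ` M'. u v * v m)" using M' by (simp add: sum_fun_apply csc_def)
    also have "\<dots> = (\<Sum>m'\<in>M'. u (e m') * e m' m)" using inj by (simp add: sum.reindex)
    also have "\<dots> = (\<Sum>m'\<in>M'. if m' = m then u (e m) else 0)"
      by (rule sum.cong) (auto simp: e_def)
    also have "\<dots> = u (e m)" using m M' by simp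
    finally show False using m by simp
  qed
  have "card (e ` M') \<le> card B" using CV.independent_span_bound[OF B ind span] by simp
  thus False using M' inj card_image by fastforce
qed

lemma lamp_carrier: "carrier (lamplighter H) = {(f, h). finite {x. f x} \<and> {x. f x} \<subseteq> carrier H \<and> h \<in> carrier H}"
  by (simp add: lamplighter_def)

lemma lamp_mult: "(f, h) \<otimes>\<^bsub>lamplighter H\<^esub> (f', h') =
   ((\<lambda>x. if x \<in> carrier H then f x \<noteq> f' (inv\<^bsub>H\<^esub> h \<otimes>\<^bsub>H\<^esub> x) else False), h \<otimes>\<^bsub>H\<^esub> h')"
  by (simp add: lamplighter_def)

lemma lamp_one: "\<one>\<^bsub>lamplighter H\<^esub> = ((\<lambda>_. False), \<one>\<^bsub>H\<^esub>)"
  by (simp add: lamplighter_def)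

definition sg :: "bool \<Rightarrow> complex" where "sg b = (if b then -1 else 1)"

lemma sg_neq: "sg (a \<noteq> b) = sg a * sg b" by (simp add: sg_def)
lemma sg_sq: "sg a * sg a = 1" by (simp add: sg_def)
lemma sg_norm: "cmod (sg a) = 1" by (simp add: sg_def)

locale lamp = rwalk +
  assumes gen: "generate H S = carrier H"
    and summ0: "summable (return_prob H S)"
begin

lemma summ: "summable (\<lambda>n. p n \<one>)"
  using summ0 by (simp add: p_return)

lemma ctbl: "countable (carrier H)"
proof -
  have "countable ((\<lambda>w. foldr (\<otimes>) w \<one>) ` lists S)"
    by (intro countable_image countable_lists countable_finite S_fin)
  thus ?thesis using generate_words gen countable_subset by metis
qed

definition enc :: "'a \<Rightarrow> nat" where "enc = to_nat_on (carrier H)"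
definition dec :: "nat \<Rightarrow> 'a" where "dec = from_nat_into (carrier H)"
definition I :: "nat set" where "I = enc ` carrier H"

lemma enc_inj: "inj_on enc (carrier H)"
  unfolding enc_def using ctbl by (rule inj_on_to_nat_on)

lemma enc_I: "x \<in> carrier H \<Longrightarrow> enc x \<in> I" by (simp add: I_def)

lemma dec_enc[simp]: "x \<in> carrier H \<Longrightarrow> dec (enc x) = x"
  unfolding enc_def dec_def using ctbl by simp

lemma I_dec: "n \<in> I \<Longrightarrow> dec n \<in> carrier H \<and> enc (dec n) = n"
  unfolding I_def by auto

lemma enc_eq: "x \<in> carrier H \<Longrightarrow> y \<in> carrier H \<Longrightarrow> enc x = enc y \<longleftrightarrow> x = y"
  using enc_inj by (auto dest: inj_onD)

lemma l2_transfer: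
  assumes "\<And>i. i \<notin> I \<Longrightarrow> u i = 0"
  shows "u \<in> l2 I \<longleftrightarrow> (\<lambda>x. (cmod (u (enc x)))\<^sup>2) summable_on carrier H"
proof -
  have "(\<lambda>i. (cmod (u i))\<^sup>2) summable_on I \<longleftrightarrow> ((\<lambda>i. (cmod (u i))\<^sup>2) \<circ> enc) summable_on carrier H"
    unfolding I_def by (rule summable_on_reindex[OF enc_inj])
  thus ?thesis using assms unfolding l2_def by (simp add: o_def)
qed

lemma l2norm_transfer: "l2norm I u = sqrt (infsum (\<lambda>x. (cmod (u (enc x)))\<^sup>2) (carrier H))"
proof -
  have "infsum (\<lambda>i. (cmod (u i))\<^sup>2) I = infsum ((\<lambda>i. (cmod (u i))\<^sup>2) \<circ> enc) (carrier H)"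
    unfolding I_def by (rule infsum_reindex[OF enc_inj])
  thus ?thesis unfolding l2norm_def by (simp add: o_def)
qed

lemma l2_zero: "u \<in> l2 I \<Longrightarrow> i \<notin> I \<Longrightarrow> u i = 0"
  unfolding l2_def by auto

definition pi :: "('a \<Rightarrow> bool) \<times> 'a \<Rightarrow> (nat \<Rightarrow> complex) \<Rightarrow> nat \<Rightarrow> complex" where
  "pi g u = (\<lambda>n. if n \<in> I then sg (fst g (dec n)) * u (enc (inv (snd g) \<otimes> dec n)) else 0)"

definition bc :: "('a \<Rightarrow> bool) \<times> 'a \<Rightarrow> nat \<Rightarrow> complex" where
  "bc g = (\<lambda>n. if n \<in> I \<and> fst g (dec n) then -2 else 0)"

lemma pi_enc: "x \<in> carrier H \<Longrightarrow> pi (f, h) u (enc x) = sg (f x) * u (enc (inv h \<otimes> x))"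
  by (simp add: pi_def enc_I)

lemma pi_l2:
  assumes h: "h \<in> carrier H" and u: "u \<in> l2 I"
  shows "pi (f, h) u \<in> l2 I"
proof -
  have "(\<lambda>x. (cmod (u (enc x)))\<^sup>2) summable_on carrier H"
    using u l2_transfer l2_zero by blast
  hence "(\<lambda>x. (cmod (u (enc (inv h \<otimes> x))))\<^sup>2) summable_on carrier H"
    using reindex_summable[of "inv h" "\<lambda>x. (cmod (u (enc x)))\<^sup>2"] h by simp
  hence "(\<lambda>x. (cmod (pi (f, h) u (enc x)))\<^sup>2) summable_on carrier H"
    by (rule summable_on_cong[THEN iffD1, rotated]) (simp add: pi_enc norm_mult sg_norm)
  thus ?thesis by (subst l2_transfer) (auto simp: pi_def)
qed

lemma pi_norm:
  assumes h: "h \<in> carrier H"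
  shows "l2norm I (pi (f, h) u) = l2norm I u"
proof -
  have "infsum (\<lambda>x. (cmod (pi (f, h) u (enc x)))\<^sup>2) (carrier H) = infsum (\<lambda>x. (cmod (u (enc (inv h \<otimes> x))))\<^sup>2) (carrier H)"
    by (rule infsum_cong) (simp add: pi_enc norm_mult sg_norm)
  also have "\<dots> = infsum (\<lambda>x. (cmod (u (enc x)))\<^sup>2) (carrier H)"
    using reindex[of "inv h" "\<lambda>x. (cmod (u (enc x)))\<^sup>2"] h by simp
  finally show ?thesis unfolding l2norm_transfer by simp
qed

lemma pi_inv:
  assumes h: "h \<in> carrier H" and u: "u \<in> l2 I"
  shows "pi (f, h) (pi (\<lambda>y. f (h \<otimes> y), inv h) u) = u"
proof
  fix n
  show "pi (f, h) (pi (\<lambda>y. f (h \<otimes> y), inv h) u) n = u n"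
  proof (cases "n \<in> I")
    case True
    then obtain y where y: "y \<in> carrier H" "n = enc y" unfolding I_def by auto
    have "pi (f, h) (pi (\<lambda>y. f (h \<otimes> y), inv h) u) n = sg (f y) * (sg (f (h \<otimes> (inv h \<otimes> y))) * u (enc (inv (inv h) \<otimes> (inv h \<otimes> y))))"
      using y h by (simp add: pi_enc)
    also have "\<dots> = sg (f y) * sg (f y) * u n"
      using y h by (simp add: m_assoc[symmetric])
    finally show ?thesis by (simp add: sg_sq)
  next
    case False
    thus ?thesis using l2_zero[OF u] by (simp add: pi_def)
  qed
qed

end

context lamp begin

lemma unitary: "unitary_rep (lamplighter H) I pi"
  unfolding unitary_rep_def
proof (intro conjI ballI allI)
  fix g assume g: "g \<in> carrier (lamplighter H)"
  then obtain f h where gfh: "g = (f, h)" and h: "h \<in> carrier H" by (auto simp: lamp_carrier)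
  show "pi g ` l2 I = l2 I"
  proof
    show "pi g ` l2 I \<subseteq> l2 I" using pi_l2[OF h] gfh by auto
    show "l2 I \<subseteq> pi g ` l2 I"
    proof
      fix u assume u: "u \<in> l2 I"
      have "u = pi g (pi (\<lambda>y. f (h \<otimes> y), inv h) u)" using pi_inv[OF h u] gfh by simp
      moreover have "pi (\<lambda>y. f (h \<otimes> y), inv h) u \<in> l2 I" using pi_l2[OF _ u] h by simp
      ultimately show "u \<in> pi g ` l2 I" by blast
    qed
  qed
  show "pi g (\<lambda>i. a * u i + b * v i) = (\<lambda>i. a * pi g u i + b * pi g v i)" for u v a b
    by (simp add: pi_def fun_eq_iff algebra_simps)
  show "l2norm I (pi g u) = l2norm I u" for u using pi_norm[OF h] gfh by simp
next
  fix u assume u: "u \<in> l2 I"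
  show "pi \<one>\<^bsub>lamplighter H\<^esub> u = u"
  proof
    fix n show "pi \<one>\<^bsub>lamplighter H\<^esub> u n = u n"
      using l2_zero[OF u, of n] I_dec[of n] by (auto simp: lamp_one pi_def sg_def)
  qed
next
  fix g g' u assume g: "g \<in> carrier (lamplighter H)" and g': "g' \<in> carrier (lamplighter H)" and u: "u \<in> l2 I"
  obtain f h where gfh: "g = (f, h)" and h: "h \<in> carrier H" using g by (auto simp: lamp_carrier)
  obtain f' h' where gfh': "g' = (f', h')" and h': "h' \<in> carrier H" using g' by (auto simp: lamp_carrier)
  show "pi (g \<otimes>\<^bsub>lamplighter H\<^esub> g') u = pi g (pi g' u)"
  proof
    fix n
    show "pi (g \<otimes>\<^bsub>lamplighter H\<^esub> g') u n = pi g (pi g' u) n"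
    proof (cases "n \<in> I")
      case True
      then obtain y where y: "y \<in> carrier H" "n = enc y" unfolding I_def by auto
      have e: "inv (h \<otimes> h') \<otimes> y = inv h' \<otimes> (inv h \<otimes> y)"
        using h h' y by (simp add: inv_mult_group m_assoc)
      show ?thesis using y h h'
        by (simp add: gfh gfh' lamp_mult pi_enc e sg_def)
    next
      case False
      thus ?thesis by (simp add: pi_def)
    qed
  qed
qed

lemma l2_fin: "finite {i. u i \<noteq> 0} \<Longrightarrow> (\<And>i. i \<notin> I \<Longrightarrow> u i = 0) \<Longrightarrow> u \<in> l2 I"
proof -
  assume fin: "finite {i. u i \<noteq> 0}" and z: "\<And>i. i \<notin> I \<Longrightarrow> u i = 0"
  have "(\<lambda>i. (cmod (u i))\<^sup>2) summable_on {i. u i \<noteq> 0}" using fin by simp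
  hence "(\<lambda>i. (cmod (u i))\<^sup>2) summable_on I"
    by (subst summable_on_cong_neutral[where T="{i. u i \<noteq> 0}" and g="\<lambda>i. (cmod (u i))\<^sup>2"]) (use z in auto)
  thus ?thesis using z by (simp add: l2_def)
qed

lemma cocycle: "cocycle (lamplighter H) I pi bc"
  unfolding cocycle_def
proof (intro conjI ballI)
  fix g assume g: "g \<in> carrier (lamplighter H)"
  then obtain f h where gfh: "g = (f, h)" and f: "finite {x. f x}" by (auto simp: lamp_carrier)
  show "bc g \<in> l2 I"
  proof (rule l2_fin)
    show "finite {i. bc g i \<noteq> 0}"
      by (rule finite_subset[OF _ finite_imageI[OF f, of enc]])
         (auto simp: bc_def gfh dest: I_dec intro!: image_eqI)
  qed (simp add: bc_def)
next
  fix g g' assume g: "g \<in> carrier (lamplighter H)" and g': "g' \<in> carrier (lamplighter H)"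
  obtain f h where gfh: "g = (f, h)" and h: "h \<in> carrier H" using g by (auto simp: lamp_carrier)
  obtain f' h' where gfh': "g' = (f', h')" and h': "h' \<in> carrier H" using g' by (auto simp: lamp_carrier)
  show "bc (g \<otimes>\<^bsub>lamplighter H\<^esub> g') = (\<lambda>i. bc g i + pi g (bc g') i)"
  proof
    fix n
    show "bc (g \<otimes>\<^bsub>lamplighter H\<^esub> g') n = bc g n + pi g (bc g') n"
    proof (cases "n \<in> I")
      case True
      then obtain y where y: "y \<in> carrier H" "n = enc y" unfolding I_def by auto
      have "inv h \<otimes> y \<in> carrier H" using h y by simp
      hence "bc (f', h') (enc (inv h \<otimes> y)) = (if f' (inv h \<otimes> y) then -2 else 0)"
        by (simp add: bc_def enc_I)
      thus ?thesis using y h h'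
        by (simp add: gfh gfh' lamp_mult pi_enc bc_def enc_I sg_def)
    next
      case False
      thus ?thesis by (simp add: pi_def bc_def)
    qed
  qed
qed

end

context lamp begin

lemma l2_lin:
  assumes u: "u \<in> l2 I" and v: "v \<in> l2 I"
  shows "(\<lambda>i. a * u i + c * v i) \<in> l2 I"
proof -
  have su: "(\<lambda>i. (cmod (u i))\<^sup>2) summable_on I" and sv: "(\<lambda>i. (cmod (v i))\<^sup>2) summable_on I"
    using u v by (auto simp: l2_def)
  have "(\<lambda>i. 2 * (cmod a)\<^sup>2 * (cmod (u i))\<^sup>2 + 2 * (cmod c)\<^sup>2 * (cmod (v i))\<^sup>2) summable_on I"
    using su sv by (intro summable_on_add summable_on_cmult_right) 
  moreover have "(cmod (a * u i + c * v i))\<^sup>2 \<le> 2 * (cmod a)\<^sup>2 * (cmod (u i))\<^sup>2 + 2 * (cmod c)\<^sup>2 * (cmod (v i))\<^sup>2" for i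
  proof -
    have "cmod (a * u i + c * v i) \<le> cmod a * cmod (u i) + cmod c * cmod (v i)"
      by (metis norm_mult norm_triangle_ineq)
    hence "(cmod (a * u i + c * v i))\<^sup>2 \<le> (cmod a * cmod (u i) + cmod c * cmod (v i))\<^sup>2"
      by (intro power_mono) auto
    also have "\<dots> \<le> 2 * (cmod a)\<^sup>2 * (cmod (u i))\<^sup>2 + 2 * (cmod c)\<^sup>2 * (cmod (v i))\<^sup>2"
    proof -
      have q: "(X + Y)\<^sup>2 \<le> 2 * X\<^sup>2 + 2 * Y\<^sup>2" for X Y :: real
        using sum_squares_bound[of X Y] by (simp add: power2_sum)
      show ?thesis using q[of "cmod a * cmod (u i)" "cmod c * cmod (v i)"] by (simp add: power_mult_distrib)
    qed
    finally show ?thesis .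
  qed
  ultimately have "(\<lambda>i. (cmod (a * u i + c * v i))\<^sup>2) summable_on I"
    by (rule summable_on_comparison_test) auto
  thus ?thesis using u v by (auto simp: l2_def)
qed

lemma coord_le:
  assumes u: "u \<in> l2 I" and n: "n \<in> I"
  shows "cmod (u n) \<le> l2norm I u"
proof -
  have "infsum (\<lambda>i. (cmod (u i))\<^sup>2) {n} \<le> infsum (\<lambda>i. (cmod (u i))\<^sup>2) I"
    by (rule infsum_mono_neutral) (use u n in \<open>auto simp: l2_def\<close>)
  hence "(cmod (u n))\<^sup>2 \<le> infsum (\<lambda>i. (cmod (u i))\<^sup>2) I" by simp
  hence "sqrt ((cmod (u n))\<^sup>2) \<le> l2norm I u" unfolding l2norm_def by (rule real_sqrt_le_mono)
  thus ?thesis by simp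
qed

end

context lamp begin

lemma bc_l2: "g \<in> carrier (lamplighter H) \<Longrightarrow> bc g \<in> l2 I"
  using cocycle unfolding cocycle_def by blast

lemma D_l2:
  assumes g: "g \<in> carrier (lamplighter H)" and v: "v \<in> l2 I"
  shows "(\<lambda>i. bc g i - (pi g v i - v i)) \<in> l2 I"
proof -
  obtain f h where gfh: "g = (f, h)" and h: "h \<in> carrier H" using g by (auto simp: lamp_carrier)
  have pv: "pi g v \<in> l2 I" using pi_l2[OF h v] gfh by simp
  have a: "(\<lambda>i. 1 * pi g v i + (-1) * v i) \<in> l2 I" by (rule l2_lin[OF pv v])
  have eq: "(\<lambda>i. 1 * bc g i + (-1) * (1 * pi g v i + (-1) * v i)) = (\<lambda>i. bc g i - (pi g v i - v i))"
    by (rule ext) simp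
  show ?thesis unfolding eq[symmetric] by (rule l2_lin[OF bc_l2[OF g] a])
qed

lemma not_closure: "\<not> in_closure_coboundaries (lamplighter H) I pi bc"
proof
  assume cl: "in_closure_coboundaries (lamplighter H) I pi bc"
  define C where "C = (\<Sum>n. p n \<one>)"
  have C0: "C \<ge> 0" unfolding C_def by (rule suminf_nonneg[OF summ]) (simp add: p_nonneg)
  define \<epsilon> where "\<epsilon> = 1 / (4 * (sqrt (2 * C) + 1))"
  have sq0: "sqrt (2 * C) \<ge> 0" using C0 by simp
  have pos1: "sqrt (2 * C) + 1 > 0" using sq0 by linarith
  have pos4: "4 * (sqrt (2 * C) + 1) > 0" using pos1 by (rule mult_pos_pos[rotated]) simp
  have e0: "\<epsilon> > 0" unfolding \<epsilon>_def using pos4 by simp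
  have gen1: "1 / (4 * (r + 1)) \<le> (1/4::real)" if "r \<ge> 0" for r using that by (simp add: field_simps)
  have e1: "\<epsilon> \<le> 1/4" unfolding \<epsilon>_def by (rule gen1[OF sq0])
  define g0 :: "('a \<Rightarrow> bool) \<times> 'a" where "g0 = ((\<lambda>x. x = \<one>), \<one>)"
  define F where "F = insert g0 ((\<lambda>s. ((\<lambda>_. False), s)) ` S)"
  have g0G: "g0 \<in> carrier (lamplighter H)" by (simp add: g0_def lamp_carrier)
  have sG: "((\<lambda>_. False), s) \<in> carrier (lamplighter H)" if "s \<in> S" for s
    using that S_sub by (auto simp: lamp_carrier)
  have Ffin: "finite F" unfolding F_def using S_fin by simp
  have FG: "F \<subseteq> carrier (lamplighter H)" unfolding F_def using g0G sG by auto
  have "\<exists>v\<in>l2 I. \<forall>g\<in>F. l2norm I (\<lambda>i. bc g i - (pi g v i - v i)) < \<epsilon>"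
    using cl Ffin FG e0 unfolding in_closure_coboundaries_def by blast
  then obtain v where v: "v \<in> l2 I" and vF0: "\<forall>g\<in>F. l2norm I (\<lambda>i. bc g i - (pi g v i - v i)) < \<epsilon>"
    by blast
  have vF: "\<And>g. g \<in> F \<Longrightarrow> l2norm I (\<lambda>i. bc g i - (pi g v i - v i)) < \<epsilon>" using vF0 by blast
  define n0 where "n0 = enc \<one>"
  have n0I: "n0 \<in> I" unfolding n0_def by (simp add: enc_I)
  have val: "bc g0 n0 - (pi g0 v n0 - v n0) = 2 * (v n0 - 1)"
    using n0I by (simp add: n0_def g0_def bc_def pi_def sg_def)
  have "cmod (bc g0 n0 - (pi g0 v n0 - v n0)) \<le> l2norm I (\<lambda>i. bc g0 i - (pi g0 v i - v i))"
    by (rule coord_le[OF D_l2[OF g0G v] n0I])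
  hence "cmod (2 * (v n0 - 1)) \<le> l2norm I (\<lambda>i. bc g0 i - (pi g0 v i - v i))"
    by (simp only: val)
  also have "\<dots> < \<epsilon>" by (rule vF) (simp add: F_def)
  finally have c2: "cmod (2 * (v n0 - 1)) < \<epsilon>" .
  have "cmod (2 * (v n0 - 1)) = 2 * cmod (v n0 - 1)" by (subst norm_mult) simp
  hence vn0: "cmod (v n0 - 1) < \<epsilon> / 2" using c2 by linarith
  define w where "w x = Re (v (enc x))" for x
  define Q where "Q s = infsum (\<lambda>x. (cmod (v (enc x) - v (enc (inv s \<otimes> x))))\<^sup>2) (carrier H)" for s
  have vs: "(\<lambda>x. (cmod (v (enc x)))\<^sup>2) summable_on carrier H"
    using v l2_transfer l2_zero by blast
  have Qs: "(\<lambda>x. (cmod (v (enc x) - v (enc (inv s \<otimes> x))))\<^sup>2) summable_on carrier H \<and> Q s < \<epsilon>\<^sup>2"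
    if s: "s \<in> S" for s
  proof -
    define gs :: "('a \<Rightarrow> bool) \<times> 'a" where "gs = ((\<lambda>_. False), s)"
    define D where "D = (\<lambda>i. bc gs i - (pi gs v i - v i))"
    have DI: "D \<in> l2 I" unfolding D_def gs_def by (rule D_l2[OF sG[OF s] v])
    have sc: "s \<in> carrier H" using s S_sub by auto
    have Denc: "(cmod (D (enc x)))\<^sup>2 = (cmod (v (enc x) - v (enc (inv s \<otimes> x))))\<^sup>2" if x: "x \<in> carrier H" for x
      using x sc by (simp add: D_def gs_def bc_def pi_enc enc_I sg_def norm_minus_commute)
    have "(\<lambda>x. (cmod (D (enc x)))\<^sup>2) summable_on carrier H"
      using DI l2_transfer l2_zero by blast
    hence sm: "(\<lambda>x. (cmod (v (enc x) - v (enc (inv s \<otimes> x))))\<^sup>2) summable_on carrier H"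
      by (rule summable_on_cong[THEN iffD1, rotated]) (simp add: Denc)
    have "l2norm I D = sqrt (Q s)"
      unfolding l2norm_transfer Q_def by (simp add: Denc cong: infsum_cong)
    moreover have "l2norm I D < \<epsilon>" unfolding D_def by (rule vF) (simp add: F_def gs_def s)
    ultimately have "sqrt (Q s) < \<epsilon>" by simp
    moreover have "Q s \<ge> 0" unfolding Q_def by (rule infsum_nonneg) auto
    ultimately have "sqrt (Q s) < sqrt (\<epsilon>\<^sup>2)" using e0 by simp
    hence "Q s < \<epsilon>\<^sup>2" by (simp only: real_sqrt_less_iff)
    thus ?thesis using sm by simp
  qed
  have w2: "(\<lambda>x. (w x)\<^sup>2) summable_on carrier H"
  proof (rule summable_on_comparison_test[OF vs])
    fix x show "(w x)\<^sup>2 \<le> (cmod (v (enc x)))\<^sup>2" unfolding w_def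
      by (simp add: cmod_power2)
  qed simp
  have wAle: "(w (inv s \<otimes> x) - w x)\<^sup>2 \<le> (cmod (v (enc x) - v (enc (inv s \<otimes> x))))\<^sup>2" for s x
  proof -
    have "(w (inv s \<otimes> x) - w x)\<^sup>2 = (Re (v (enc x) - v (enc (inv s \<otimes> x))))\<^sup>2"
      unfolding w_def by (simp add: power2_commute)
    also have "\<dots> \<le> (cmod (v (enc x) - v (enc (inv s \<otimes> x))))\<^sup>2"
      by (simp add: cmod_power2)
    finally show ?thesis .
  qed
  have wA: "(\<lambda>x. (w (inv s \<otimes> x) - w x)\<^sup>2) summable_on carrier H" if s: "s \<in> S" for s
    by (rule summable_on_comparison_test[OF Qs[OF s, THEN conjunct1]]) (use wAle in auto)
  define A where "A s = infsum (\<lambda>x. (w (inv s \<otimes> x) - w x)\<^sup>2) (carrier H)" for s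
  have AQ: "A s \<le> \<epsilon>\<^sup>2" if s: "s \<in> S" for s
  proof -
    have "A s \<le> Q s" unfolding A_def Q_def
      by (rule infsum_mono[OF wA[OF s] Qs[OF s, THEN conjunct1]]) (rule wAle)
    thus ?thesis using Qs[OF s] by simp
  qed
  have sumA: "(\<Sum>s\<in>S. A s) \<le> k * \<epsilon>\<^sup>2"
  proof -
    have "(\<Sum>s\<in>S. A s) \<le> (\<Sum>s\<in>S. \<epsilon>\<^sup>2)" by (rule sum_mono) (rule AQ)
    thus ?thesis by (simp add: k_def)
  qed
  define W where "W = infsum (\<lambda>x. (w x)\<^sup>2) (carrier H)"
  have W0: "W \<ge> 0" unfolding W_def by (rule infsum_nonneg) auto
  obtain N where N: "p (2 * N) \<one> < 1 / (16 * (W + 1))"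
    using p_small[OF summ, of "1 / (16 * (W + 1))"] W0 by auto
  have cap: "\<bar>w \<one>\<bar> \<le> sqrt (\<Sum>s\<in>S. A s) * sqrt (2 * k * C) / (2 * k) + sqrt W * sqrt (p (2 * N) \<one>)"
    unfolding A_def W_def C_def by (rule capacity[OF summ w2 wA])
  have t1: "sqrt (\<Sum>s\<in>S. A s) * sqrt (2 * k * C) / (2 * k) \<le> 1/8"
  proof -
    have "sqrt (\<Sum>s\<in>S. A s) * sqrt (2 * k * C) / (2 * k) \<le> \<epsilon> * sqrt (2 * C) / 2"
      unfolding C_def by (rule cap_cor[OF summ _ sumA]) (use e0 in simp)
    also have "\<dots> = sqrt (2 * C) / (4 * (sqrt (2 * C) + 1)) / 2" by (simp add: \<epsilon>_def)
    also have "\<dots> \<le> 1/8"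
    proof -
      have gen2: "r / (4 * (r + 1)) / 2 \<le> (1/8::real)" if "r \<ge> 0" for r using that by (simp add: field_simps)
      show ?thesis by (rule gen2[OF sq0])
    qed
    finally show ?thesis .
  qed
  have t2: "sqrt W * sqrt (p (2 * N) \<one>) \<le> 1/4"
  proof -
    have "W * p (2 * N) \<one> \<le> W * (1 / (16 * (W + 1)))" using N W0 by (intro mult_left_mono) auto
    also have "\<dots> \<le> 1/16" using W0 by (simp add: field_simps)
    finally have "sqrt (W * p (2 * N) \<one>) \<le> sqrt (1/16)" by (rule real_sqrt_le_mono)
    also have "sqrt (1/16) = (1/4::real)" by (simp add: real_sqrt_divide)
    finally show ?thesis by (simp add: real_sqrt_mult)
  qed
  have "\<bar>w \<one> - 1\<bar> < \<epsilon> / 2"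
  proof -
    have "\<bar>w \<one> - 1\<bar> = \<bar>Re (v n0 - 1)\<bar>" by (simp add: w_def n0_def)
    also have "\<dots> \<le> cmod (v n0 - 1)" by (rule abs_Re_le_cmod)
    finally show ?thesis using vn0 by simp
  qed
  thus False using cap t1 t2 e1 by linarith
qed

lemma no_fd: "\<not> has_nonzero_fd_subrep (lamplighter H) I pi"
proof
  assume "has_nonzero_fd_subrep (lamplighter H) I pi"
  then obtain V where V0: "V \<subseteq> l2 I \<and> (\<lambda>_. 0) \<in> V \<and>
          (\<forall>u\<in>V. \<forall>v\<in>V. \<forall>a b::complex. (\<lambda>i. a * u i + b * v i) \<in> V) \<and>
          (\<exists>B. finite B \<and> B \<subseteq> V \<and>
               (\<forall>u\<in>V. \<exists>c. u = (\<lambda>i. \<Sum>w\<in>B. c w * w i))) \<and>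
          (\<exists>u\<in>V. u \<noteq> (\<lambda>_. 0)) \<and>
          (\<forall>g\<in>carrier (lamplighter H). \<forall>u\<in>V. pi g u \<in> V)"
    unfolding has_nonzero_fd_subrep_def by blast
  then obtain B where B0: "finite B \<and> B \<subseteq> V \<and> (\<forall>u\<in>V. \<exists>c. u = (\<lambda>i. \<Sum>w\<in>B. c w * w i))"
    by blast
  have V: "V \<subseteq> l2 I" using V0 by blast
  have lin: "\<And>u v a b. u \<in> V \<Longrightarrow> v \<in> V \<Longrightarrow> (\<lambda>i. a * u i + b * v i) \<in> V" using V0 by blast
  have B: "finite B" "\<And>u. u \<in> V \<Longrightarrow> \<exists>c. u = (\<lambda>i. \<Sum>w\<in>B. c w * w i)" using B0 by blast+
  have nz: "\<exists>u\<in>V. u \<noteq> (\<lambda>_. 0)" using V0 by blast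
  have inv: "\<And>g u. g \<in> carrier (lamplighter H) \<Longrightarrow> u \<in> V \<Longrightarrow> pi g u \<in> V" using V0 by blast
  obtain u where u: "u \<in> V" "u \<noteq> (\<lambda>_. 0)" using nz by blast
  then obtain n where un: "u n \<noteq> 0" by auto
  have uI: "u \<in> l2 I" using u V by auto
  have nI: "n \<in> I" using l2_zero[OF uI] un by blast
  define y where "y = dec n"
  have y: "y \<in> carrier H" "enc y = n" using I_dec[OF nI] by (auto simp: y_def)
  define e :: "nat \<Rightarrow> nat \<Rightarrow> complex" where "e m = (\<lambda>i. if i = m then 1 else 0)" for m
  define g1 :: "('a \<Rightarrow> bool) \<times> 'a" where "g1 = ((\<lambda>x. x = y), \<one>)"
  have g1G: "g1 \<in> carrier (lamplighter H)" using y by (simp add: g1_def lamp_carrier)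
  have "(\<lambda>i. (1 / (2 * u n)) * u i + (- 1 / (2 * u n)) * pi g1 u i) \<in> V"
    by (rule lin[OF u(1) inv[OF g1G u(1)]])
  moreover have "(\<lambda>i. (1 / (2 * u n)) * u i + (- 1 / (2 * u n)) * pi g1 u i) = e n"
  proof
    fix i
    show "(1 / (2 * u n)) * u i + (- 1 / (2 * u n)) * pi g1 u i = e n i"
    proof (cases "i \<in> I")
      case True
      then obtain x where x: "x \<in> carrier H" "i = enc x" unfolding I_def by auto
      have "x = y \<longleftrightarrow> i = n" using x y enc_eq by auto
      show ?thesis
      proof (cases "i = n")
        case True
        hence "x = y" using \<open>x = y \<longleftrightarrow> i = n\<close> by simp
        have "pi g1 u n = sg True * u (enc (inv \<one> \<otimes> y))" using nI by (simp add: g1_def pi_def y_def)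
        hence "pi g1 u i = - u n" using y True by (simp add: sg_def)
        thus ?thesis using True un by (simp add: e_def field_simps)
      next
        case False
        hence "x \<noteq> y" using \<open>x = y \<longleftrightarrow> i = n\<close> by simp
        have "pi g1 u i = u i" using x y \<open>x \<noteq> y\<close> by (simp add: g1_def pi_enc sg_def)
        thus ?thesis using False un by (simp add: e_def field_simps)
      qed
    next
      case False
      thus ?thesis using l2_zero[OF uI False] nI by (auto simp: pi_def e_def)
    qed
  qed
  ultimately have en: "e n \<in> V" by simp
  have ez: "e (enc z) \<in> V" if z: "z \<in> carrier H" for z
  proof -
    define gz :: "('a \<Rightarrow> bool) \<times> 'a" where "gz = ((\<lambda>_. False), z \<otimes> inv y)"
    have gzG: "gz \<in> carrier (lamplighter H)" using y z by (simp add: gz_def lamp_carrier)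
    have "pi gz (e n) = e (enc z)"
    proof
      fix i
      show "pi gz (e n) i = e (enc z) i"
      proof (cases "i \<in> I")
        case True
        then obtain x where x: "x \<in> carrier H" "i = enc x" unfolding I_def by auto
        have c1: "inv (z \<otimes> inv y) \<otimes> x \<in> carrier H" using x y z by simp
        have "enc (inv (z \<otimes> inv y) \<otimes> x) = n \<longleftrightarrow> inv (z \<otimes> inv y) \<otimes> x = y"
          using enc_eq[OF c1 y(1)] y by simp
        also have "\<dots> \<longleftrightarrow> x = (z \<otimes> inv y) \<otimes> y"
          using inv_solve_left[of y "z \<otimes> inv y" x] x y z by auto
        also have "(z \<otimes> inv y) \<otimes> y = z" using y z by (simp add: m_assoc)
        finally have "enc (inv (z \<otimes> inv y) \<otimes> x) = n \<longleftrightarrow> i = enc z"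
          using x z enc_eq by auto
        thus ?thesis using x by (simp add: gz_def pi_enc e_def sg_def)
      next
        case False
        thus ?thesis using z enc_I[OF z] by (auto simp: pi_def e_def)
      qed
    qed
    thus ?thesis using inv[OF gzG en] by simp
  qed
  have Iinf: "infinite I"
    unfolding I_def using H_infinite[OF summ] enc_inj finite_image_iff by blast
  show False
  proof (rule dim_contra[OF B(1) Iinf])
    fix m assume "m \<in> I"
    then obtain z where z: "z \<in> carrier H" "m = enc z" unfolding I_def by auto
    show "\<exists>c. (\<lambda>i. if i = m then 1 else 0) = (\<lambda>i. \<Sum>w\<in>B. c w * w i)"
      using B(2)[OF ez[OF z(1)]] z by (simp add: e_def)
  qed
qed

end

theorem proposition4p1:
  fixes H :: "('a, 'b) monoid_scheme"
  assumes "group H"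
    and "finitely_generated H"
    and "srw_transient H"
  shows "\<not> has_HFD (lamplighter H)"
proof -
  obtain S where S: "finite S" "S \<noteq> {}" "S \<subseteq> carrier H" "\<forall>s\<in>S. inv\<^bsub>H\<^esub> s \<in> S"
    "generate H S = carrier H" "summable (return_prob H S)"
    using assms(3) unfolding srw_transient_def by blast
  interpret lamp H S
    by (intro lamp.intro rwalk.intro lamp_axioms.intro rwalk_axioms.intro assms(1)) (use S in auto)
  show ?thesis
    unfolding has_HFD_def
  proof
    assume "\<forall>I \<pi>. unitary_rep (lamplighter H) I \<pi> \<and> nonzero_reduced_H1 (lamplighter H) I \<pi> \<longrightarrow>
        has_nonzero_fd_subrep (lamplighter H) I \<pi>"
    moreover have "nonzero_reduced_H1 (lamplighter H) I pi"
      unfolding nonzero_reduced_H1_def using cocycle not_closure by blast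
    ultimately show False using unitary no_fd by blast
  qed
qed

end
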